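(* For a concrete category $|\text{-}|:\mathcal E\to\mathcal B$, the following are equivalent: (i) $\mathcal E$ is topological over $\mathcal B$; (ii) the $\mathcal Q_{\mathcal B}$-category $\overline{\mathcal E}$ is tensored and conically cocomplete; (iii) $\mathcal E$ is cofibred over $\mathcal B$ and $\overline{\mathcal E}$ is conically cocomplete.
   Context: $\mathcal B$ has small hom-sets; $|\text{-}|$ is faithful; a map $f:|X|\to|Y|$ is an $\mathcal E$-morphism if it equals $|f'|$ for some $f':X\to Y$; $\overline{\mathcal E}(X,Y)$ is the set of these. A structured sink over $T$ is a (possibly large) family of maps $f_i:|X_i|\to T$; a final lifting is $Y$ with $|Y|=T$ such that all $f_i$ are $\mathcal E$-morphisms and $g:T\to|Z|$ is an $\mathcal E$-morphism $Y\to Z$ whenever all $g\circ f_i$ are $\mathcal E$-morphisms; $\mathcal E$ is topological if all structured sinks have final liftings, and cofibred if all one-element structured sinks $f:|X|\to T$ have final liftings. For $\mathbf f\subseteq\mathcal B(S,T)$, $\mathbf h\subseteq\mathcal B(S,U)$ let $\mathbf h\swarrow\mathbf f=\{g\mid\forall f\in\mathbf f:g\circ f\in\mathbf h\}$. $\overline{\mathcal E}$ is tensored if for all $X$ and all subsets $\mathbf u\subseteq\mathcal B(|X|,T)$ there is $Y$ with $|Y|=T$ and $\overline{\mathcal E}(Y,Z)=\overline{\mathcal E}(X,Z)\swarrow\mathbf u$ for all $Z$. A presheaf of extent $T$ is a family $\varphi_X\subseteq\mathcal B(|X|,T)$ with $\varphi_X\circ\overline{\mathcal E}(X',X)\subseteq\varphi_{X'}$;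 a supremum is $Y$ with $|Y|=T$ and $\overline{\mathcal E}(Y,Z)=\bigcap_X\overline{\mathcal E}(X,Z)\swarrow\varphi_X$ for all $Z$. $\overline{\mathcal E}$ is conically cocomplete if for every $T$ and every family $(Y_i)$ of objects with $|Y_i|=T$ the presheaf $X\mapsto\bigcup_i\overline{\mathcal E}(X,Y_i)$ has a supremum. *)

theory Defs
  imports Main
begin

text \<open>The base category B: all elements of type 'b are objects; arrows are the
elements of Arr with domain/codomain, composition cmp g f (= g after f) and identities.
Hom-sets are sets, hence small.\<close>

definition Hom :: "'m set \<Rightarrow> ('m \<Rightarrow> 'b) \<Rightarrow> ('m \<Rightarrow> 'b) \<Rightarrow> 'b \<Rightarrow> 'b \<Rightarrow> 'm set" where
  "Hom Arr dm cd S T = {f \<in> Arr. dm f = S \<and> cd f = T}"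

definition category :: "'m set \<Rightarrow> ('m \<Rightarrow> 'b) \<Rightarrow> ('m \<Rightarrow> 'b) \<Rightarrow> ('m \<Rightarrow> 'm \<Rightarrow> 'm) \<Rightarrow> ('b \<Rightarrow> 'm) \<Rightarrow> bool" where
  "category Arr dm cd cmp ident \<longleftrightarrow>
     (\<forall>S. ident S \<in> Hom Arr dm cd S S) \<and>
     (\<forall>S T U f g. f \<in> Hom Arr dm cd S T \<longrightarrow> g \<in> Hom Arr dm cd T U \<longrightarrow> cmp g f \<in> Hom Arr dm cd S U) \<and>
     (\<forall>f\<in>Arr. cmp (ident (cd f)) f = f \<and> cmp f (ident (dm f)) = f) \<and>
     (\<forall>f g h. f \<in> Arr \<longrightarrow> g \<in> Arr \<longrightarrow> h \<in> Arr \<longrightarrow> dm g = cd f \<longrightarrow> dm h = cd g \<longrightarrow>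
        cmp h (cmp g f) = cmp (cmp h g) f)"

text \<open>A concrete category over B: objects are the elements of type 'e, U X = |X|, and
Em X Y = \<open>\<overline>E\<close>(X,Y) is the set of B-maps |X| \<rightarrow> |Y| that are E-morphisms
(i.e. images of E-morphisms under the faithful functor |-|).  Faithfulness lets us
identify E(X,Y) with this set.\<close>

definition concrete_cat where
  "concrete_cat Arr dm cd cmp ident (U :: 'e \<Rightarrow> 'b) (Em :: 'e \<Rightarrow> 'e \<Rightarrow> 'm set) \<longleftrightarrow>
     category Arr dm cd cmp ident \<and>
     (\<forall>X Y. Em X Y \<subseteq> Hom Arr dm cd (U X) (U Y)) \<and>
     (\<forall>X. ident (U X) \<in> Em X X) \<and>
     (\<forall>X Y Z f g. f \<in> Em X Y \<longrightarrow> g \<in> Em Y Z \<longrightarrow> cmp g f \<in> Em X Z)"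

definition structured_sink where
  "structured_sink Arr dm cd U T (sink :: ('e \<times> 'm) set) \<longleftrightarrow>
     (\<forall>(X, f) \<in> sink. f \<in> Hom Arr dm cd (U X) T)"

definition final_lifting where
  "final_lifting Arr dm cd cmp U Em T sink Y \<longleftrightarrow>
     U Y = T \<and>
     (\<forall>(X, f) \<in> sink. f \<in> Em X Y) \<and>
     (\<forall>Z g. g \<in> Hom Arr dm cd T (U Z) \<longrightarrow> (\<forall>(X, f) \<in> sink. cmp g f \<in> Em X Z) \<longrightarrow> g \<in> Em Y Z)"

definition topological where
  "topological Arr dm cd cmp U Em \<longleftrightarrow>
     (\<forall>T sink. structured_sink Arr dm cd U T sink \<longrightarrow> (\<exists>Y. final_lifting Arr dm cd cmp U Em T sink Y))"

definition cofibred where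
  "cofibred Arr dm cd cmp U Em \<longleftrightarrow>
     (\<forall>T X f. f \<in> Hom Arr dm cd (U X) T \<longrightarrow> (\<exists>Y. final_lifting Arr dm cd cmp U Em T {(X, f)} Y))"

text \<open>Right extension h \<swarrow> f for f \<subseteq> B(S,T), h \<subseteq> B(S,V): maps g : T \<rightarrow> V with g\<circ>f \<in> h for all f.\<close>

definition lext where
  "lext Arr dm cd cmp hs fs T V = {g \<in> Hom Arr dm cd T V. \<forall>f \<in> fs. cmp g f \<in> hs}"

definition tensored where
  "tensored Arr dm cd cmp U Em \<longleftrightarrow>
     (\<forall>X T u. u \<subseteq> Hom Arr dm cd (U X) T \<longrightarrow>
        (\<exists>Y. U Y = T \<and> (\<forall>Z. Em Y Z = lext Arr dm cd cmp (Em X Z) u T (U Z))))"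

definition presheaf where
  "presheaf Arr dm cd cmp U Em T (\<phi> :: 'e \<Rightarrow> 'm set) \<longleftrightarrow>
     (\<forall>X. \<phi> X \<subseteq> Hom Arr dm cd (U X) T) \<and>
     (\<forall>X X' f h. f \<in> \<phi> X \<longrightarrow> h \<in> Em X' X \<longrightarrow> cmp f h \<in> \<phi> X')"

definition supremum where
  "supremum Arr dm cd cmp U Em T \<phi> Y \<longleftrightarrow>
     U Y = T \<and> (\<forall>Z. Em Y Z = (\<Inter>X. lext Arr dm cd cmp (Em X Z) (\<phi> X) T (U Z)))"

text \<open>Conically cocomplete: for every T and every family (Y_i) of objects over T
(represented by its set of members; repetitions are irrelevant) the presheaf
X \<mapsto> \<Union>_i \<overline>E(X,Y_i) has a supremum.\<close>

definition conically_cocomplete where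
  "conically_cocomplete Arr dm cd cmp U Em \<longleftrightarrow>
     (\<forall>T (Ys :: 'e set). (\<forall>Y\<in>Ys. U Y = T) \<longrightarrow>
        (\<exists>S. supremum Arr dm cd cmp U Em T (\<lambda>X. \<Union>Y\<in>Ys. Em X Y) S))"

end

theory Submission
  imports Defs
begin

lemma cc_facts:
  assumes "concrete_cat Arr dm cd cmp ident U Em"
  shows "Em X Y \<subseteq> Hom Arr dm cd (U X) (U Y)"
    and "ident (U X) \<in> Em X X"
    and "f \<in> Em X Y \<Longrightarrow> g \<in> Em Y Z \<Longrightarrow> cmp g f \<in> Em X Z"
    and "f \<in> Hom Arr dm cd S T \<Longrightarrow> cmp (ident T) f = f"
  using assms unfolding concrete_cat_def category_def Hom_def by auto

lemma top_tens:
  assumes cc: "concrete_cat Arr dm cd cmp ident U Em"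
    and t: "topological Arr dm cd cmp U Em"
  shows "tensored Arr dm cd cmp U Em"
  unfolding tensored_def
proof (intro allI impI)
  fix X T u assume u: "u \<subseteq> Hom Arr dm cd (U X) T"
  let ?s = "{(X, f) | f. f \<in> u}"
  have "structured_sink Arr dm cd U T ?s" using u unfolding structured_sink_def by auto
  then obtain Y where Y: "final_lifting Arr dm cd cmp U Em T ?s Y" using t unfolding topological_def by blast
  have "Em Y Z = lext Arr dm cd cmp (Em X Z) u T (U Z)" for Z
  proof
    show "Em Y Z \<subseteq> lext Arr dm cd cmp (Em X Z) u T (U Z)"
      using Y cc_facts[OF cc] unfolding final_lifting_def lext_def by blast
    show "lext Arr dm cd cmp (Em X Z) u T (U Z) \<subseteq> Em Y Z"
      using Y unfolding final_lifting_def lext_def by blast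
  qed
  then show "\<exists>Y. U Y = T \<and> (\<forall>Z. Em Y Z = lext Arr dm cd cmp (Em X Z) u T (U Z))"
    using Y unfolding final_lifting_def by blast
qed

lemma top_cocomp:
  assumes cc: "concrete_cat Arr dm cd cmp ident U Em"
    and t: "topological Arr dm cd cmp U Em"
  shows "conically_cocomplete Arr dm cd cmp U Em"
  unfolding conically_cocomplete_def
proof (intro allI impI)
  fix T Ys assume Ys: "\<forall>Y\<in>Ys. U Y = T"
  let ?s = "{(X, f) | X f. f \<in> (\<Union>Y\<in>Ys. Em X Y)}"
  have "structured_sink Arr dm cd U T ?s" unfolding structured_sink_def
  proof (clarify)
    fix X f Y assume "Y \<in> Ys" "f \<in> Em X Y"
    then show "f \<in> Hom Arr dm cd (U X) T" using Ys cc_facts(1)[OF cc, of X Y] by auto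
  qed
  then obtain S where S: "final_lifting Arr dm cd cmp U Em T ?s S" using t unfolding topological_def by blast
  have "Em S Z = (\<Inter>X. lext Arr dm cd cmp (Em X Z) (\<Union>Y\<in>Ys. Em X Y) T (U Z))" for Z
  proof
    show "Em S Z \<subseteq> (\<Inter>X. lext Arr dm cd cmp (Em X Z) (\<Union>Y\<in>Ys. Em X Y) T (U Z))"
    proof
      fix g assume g: "g \<in> Em S Z"
      have "U S = T" using S unfolding final_lifting_def by blast
      then have "g \<in> Hom Arr dm cd T (U Z)" using g cc_facts(1)[OF cc, of S Z] by auto
      moreover have "cmp g f \<in> Em X Z" if "f \<in> (\<Union>Y\<in>Ys. Em X Y)" for X f
      proof -
        have "(X, f) \<in> ?s" using that by blast
        then have "f \<in> Em X S" using S unfolding final_lifting_def by blast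
        then show ?thesis using cc_facts(3)[OF cc] g by blast
      qed
      ultimately show "g \<in> (\<Inter>X. lext Arr dm cd cmp (Em X Z) (\<Union>Y\<in>Ys. Em X Y) T (U Z))"
        unfolding lext_def by blast
    qed
    show "(\<Inter>X. lext Arr dm cd cmp (Em X Z) (\<Union>Y\<in>Ys. Em X Y) T (U Z)) \<subseteq> Em S Z"
    proof
      fix g assume g: "g \<in> (\<Inter>X. lext Arr dm cd cmp (Em X Z) (\<Union>Y\<in>Ys. Em X Y) T (U Z))"
      then have "g \<in> Hom Arr dm cd T (U Z)" unfolding lext_def by blast
      moreover have "\<forall>(X, f) \<in> ?s. cmp g f \<in> Em X Z"
      proof clarify
        fix X f Y assume "Y \<in> Ys" "f \<in> Em X Y"
        moreover have "g \<in> lext Arr dm cd cmp (Em X Z) (\<Union>Y\<in>Ys. Em X Y) T (U Z)" using g by blast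
        ultimately show "cmp g f \<in> Em X Z" unfolding lext_def by blast
      qed
      ultimately show "g \<in> Em S Z" using S unfolding final_lifting_def by blast
    qed
  qed
  moreover have "U S = T" using S unfolding final_lifting_def by blast
  ultimately show "\<exists>S. supremum Arr dm cd cmp U Em T (\<lambda>X. \<Union>Y\<in>Ys. Em X Y) S"
    unfolding supremum_def by blast
qed

lemma tens_cof:
  assumes cc: "concrete_cat Arr dm cd cmp ident U Em"
    and t: "tensored Arr dm cd cmp U Em"
  shows "cofibred Arr dm cd cmp U Em"
  unfolding cofibred_def
proof (intro allI impI)
  fix T X f assume f: "f \<in> Hom Arr dm cd (U X) T"
  then obtain Y where Y: "U Y = T" "\<And>Z. Em Y Z = lext Arr dm cd cmp (Em X Z) {f} T (U Z)"
    using t unfolding tensored_def by (metis empty_subsetI insert_subset)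
  have "ident T \<in> Em Y Y" using cc_facts(2)[OF cc, of Y] Y by simp
  then have "cmp (ident T) f \<in> Em X Y" using Y(2)[of Y] unfolding lext_def by blast
  then have fy: "f \<in> Em X Y" using cc_facts(4)[OF cc f] by simp
  show "\<exists>Y. final_lifting Arr dm cd cmp U Em T {(X, f)} Y"
    unfolding final_lifting_def using Y fy unfolding lext_def by blast
qed

lemma single_lift:
  assumes cc: "concrete_cat Arr dm cd cmp ident U Em"
    and Y: "final_lifting Arr dm cd cmp U Em T {(X, f)} Y"
  shows "Em Y Z = lext Arr dm cd cmp (Em X Z) {f} T (U Z)"
proof
  show "Em Y Z \<subseteq> lext Arr dm cd cmp (Em X Z) {f} T (U Z)"
    using Y cc_facts[OF cc] unfolding final_lifting_def lext_def by blast
  show "lext Arr dm cd cmp (Em X Z) {f} T (U Z) \<subseteq> Em Y Z"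
    using Y unfolding final_lifting_def lext_def by blast
qed

lemma cof_top:
  assumes cc: "concrete_cat Arr dm cd cmp ident U Em"
    and c: "cofibred Arr dm cd cmp U Em"
    and k: "conically_cocomplete Arr dm cd cmp U Em"
  shows "topological Arr dm cd cmp U Em"
  unfolding topological_def
proof (intro allI impI)
  fix T sink assume s: "structured_sink Arr dm cd U T sink"
  have "\<forall>p\<in>sink. \<exists>Y. final_lifting Arr dm cd cmp U Em T {p} Y"
    using s c unfolding structured_sink_def cofibred_def by fast
  then obtain F where F: "\<And>p. p \<in> sink \<Longrightarrow> final_lifting Arr dm cd cmp U Em T {p} (F p)"
    by metis
  let ?Ys = "F ` sink"
  have "\<forall>Y\<in>?Ys. U Y = T" using F unfolding final_lifting_def by blast
  then obtain S where S: "supremum Arr dm cd cmp U Em T (\<lambda>X. \<Union>Y\<in>?Ys. Em X Y) S"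
    using k unfolding conically_cocomplete_def by blast
  have US: "U S = T" using S unfolding supremum_def by blast
  have ES: "\<And>Z. Em S Z = (\<Inter>X. lext Arr dm cd cmp (Em X Z) (\<Union>Y\<in>?Ys. Em X Y) T (U Z))"
    using S unfolding supremum_def by blast
  have part2: "\<forall>(X, f) \<in> sink. f \<in> Em X S"
  proof (intro ballI, clarify)
    fix X f assume p: "(X, f) \<in> sink"
    have fF: "f \<in> Em X (F (X, f))" using F[OF p] unfolding final_lifting_def by blast
    have "ident T \<in> Em S S" using cc_facts(2)[OF cc, of S] US by simp
    then have "cmp (ident T) f \<in> Em X S" using ES[of S] fF p unfolding lext_def by blast
    moreover have "f \<in> Hom Arr dm cd (U X) T" using s p unfolding structured_sink_def by blast
    ultimately show "f \<in> Em X S" using cc_facts(4)[OF cc] by metis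
  qed
  have part3: "g \<in> Em S Z" if g: "g \<in> Hom Arr dm cd T (U Z)"
    and h: "\<forall>(X, f) \<in> sink. cmp g f \<in> Em X Z" for Z g
  proof -
    have "g \<in> Em (F p) Z" if p: "p \<in> sink" for p
    proof -
      obtain X f where pe: "p = (X, f)" by fastforce
      show ?thesis using single_lift[OF cc F[OF p[unfolded pe]]] g h p pe
        unfolding lext_def by blast
    qed
    then have "g \<in> lext Arr dm cd cmp (Em X Z) (\<Union>Y\<in>?Ys. Em X Y) T (U Z)" for X
      using g cc_facts(3)[OF cc] unfolding lext_def by blast
    then show ?thesis using ES by blast
  qed
  show "\<exists>Y. final_lifting Arr dm cd cmp U Em T sink Y"
    using US part2 part3 unfolding final_lifting_def by blast
qed

theorem corollary5p4:
  fixes Arr :: "'m set" and dm cd :: "'m \<Rightarrow> 'b" and cmp :: "'m \<Rightarrow> 'm \<Rightarrow> 'm"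
    and ident :: "'b \<Rightarrow> 'm" and U :: "'e \<Rightarrow> 'b" and Em :: "'e \<Rightarrow> 'e \<Rightarrow> 'm set"
  assumes "concrete_cat Arr dm cd cmp ident U Em"
  shows "(topological Arr dm cd cmp U Em \<longleftrightarrow>
           tensored Arr dm cd cmp U Em \<and> conically_cocomplete Arr dm cd cmp U Em) \<and>
         (tensored Arr dm cd cmp U Em \<and> conically_cocomplete Arr dm cd cmp U Em \<longleftrightarrow>
           cofibred Arr dm cd cmp U Em \<and> conically_cocomplete Arr dm cd cmp U Em)"
  using top_tens[OF assms] top_cocomp[OF assms] tens_cof[OF assms] cof_top[OF assms] by blast

end
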